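(* Let $T$, $S$, $A$ be closed Hermitian subspaces in $X^2$ with $D(T)=D(S)=:D\subset D(A)$ and $T=S+A$, and assume $\rho(T)\cap\rho(S)\neq\emptyset$. (i) If $A_s$ is $S_s$-compact, then $T$ is a compact perturbation of $S$. (ii) If $T$ is a compact perturbation of $S$, $T(0)^\perp$ reduces both $S$ and $A$, and $T_s$ is a bounded operator on $D$, then $A_s$ is $S_s$-compact.
   Context: $X$ is a complex Hilbert space and $X^2=X\times X$ carries the inner product $\langle (x,f),(y,g)\rangle=\langle x,y\rangle+\langle f,g\rangle$. A subspace $T$ in $X^2$ means a linear subspace of $X^2$ (a linear relation); a linear operator in $X$ is identified with its graph. Notation: $D(T)=\{x:(x,f)\in T \text{ for some } f\}$, $T(x)=\{f:(x,f)\in T\}$, $T^{-1}=\{(f,x):(x,f)\in T\}$, $\lambda I$ is the graph of $x\mapsto \lambda x$, and $T-\lambda I=\{(x,f-\lambda x):(x,f)\in T\}$. The adjoint is $T^*=\{(y,g)\in X^2:\langle g,x\rangle=\langle y,f\rangle \text{ for all }(x,f)\in T\}$; $T$ is Hermitian if $T\subset T^*$. For subspaces $S,A$ in $X^2$, $S+A=\{(x,f+g):(x,f)\in S,(x,g)\in A\}$. For a closed subspace $T$, set $T_\infty=\{(0,g)\in X^2:(0,g)\in T\}$ and $T_s=T\ominus T_\infty$ (orthogonal complement of $T_\infty$ in $T$), so $T=T_s\oplus T_\infty$; $T_s$ is the graph of a linear operator (the operator part of $T$) with $D(T_s)=D(T)$ and $R(T_s)\subset T(0)^\perp$. Resolvent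 set: $\rho(T)=\{\lambda\in\mathbb C:(\lambda I-T)^{-1}$ is a bounded linear operator defined on all of $X\}$. Reducing subspace: a closed subspace $X_1\subset X$ with orthogonal projection $P$ onto it reduces $T$ if $\{(Px,Pf):(x,f)\in T\}\subset T$. For linear operators $U,V$ in $X$ with $D(V)\subset D(U)$: $U$ is $V$-compact if $U|_{D(V)}$ is compact as a map from $(D(V),\|\cdot\|_V)$ into $X$, where $\|x\|_V=\|x\|+\|Vx\|$. Compact perturbation: for closed subspaces $T,S$ in $X^2$ with orthogonal projections $P_T,P_S$ of $X^2$ onto $T$, $S$, $T$ is a compact perturbation of $S$ if $P_T-P_S$ is a compact operator. *)

theory Defs
  imports "HOL-Analysis.Analysis"
begin

text \<open>The library has no complex inner product spaces, so we introduce them as a type class: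
a complex vector space whose real scalar multiplication is the restriction of the complex one,
with a sesquilinear Hermitian positive definite inner product inducing the norm.
The inner product is linear in the first argument, conjugate linear in the second.\<close>

class complex_vector = real_vector +
  fixes scaleC :: "complex \<Rightarrow> 'a \<Rightarrow> 'a"  (infixr \<open>*\<^sub>C\<close> 75)
  assumes scaleC_add_right: "a *\<^sub>C (x + y) = a *\<^sub>C x + a *\<^sub>C y"
    and scaleC_add_left: "(a + b) *\<^sub>C x = a *\<^sub>C x + b *\<^sub>C x"
    and scaleC_scaleC: "a *\<^sub>C (b *\<^sub>C x) = (a * b) *\<^sub>C x"
    and scaleC_one: "1 *\<^sub>C x = x"
    and scaleR_scaleC: "scaleR r x = complex_of_real r *\<^sub>C x"

class complex_inner = complex_vector + real_normed_vector +
  fixes cinner :: "'a \<Rightarrow> 'a \<Rightarrow> complex"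
  assumes cinner_conj: "cinner x y = cnj (cinner y x)"
    and cinner_add_left: "cinner (x + y) z = cinner x z + cinner y z"
    and cinner_scaleC_left: "cinner (a *\<^sub>C x) y = a * cinner x y"
    and cinner_nonneg: "Re (cinner x x) \<ge> 0" "Im (cinner x x) = 0"
    and cinner_eq_zero: "cinner x x = 0 \<longleftrightarrow> x = 0"
    and norm_cinner: "norm x = sqrt (Re (cinner x x))"

class chilbert_space = complex_inner + complete_space

definition pinner :: "('a::complex_inner \<times> 'a) \<Rightarrow> ('a \<times> 'a) \<Rightarrow> complex" where
  "pinner p q = cinner (fst p) (fst q) + cinner (snd p) (snd q)"

definition is_subspace :: "('a::complex_vector \<times> 'a) set \<Rightarrow> bool" where
  "is_subspace T \<longleftrightarrow> (0, 0) \<in> T \<and>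
     (\<forall>x f y g. (x, f) \<in> T \<longrightarrow> (y, g) \<in> T \<longrightarrow> (x + y, f + g) \<in> T) \<and>
     (\<forall>c x f. (x, f) \<in> T \<longrightarrow> (c *\<^sub>C x, c *\<^sub>C f) \<in> T)"

definition closed_subspace :: "('a::complex_inner \<times> 'a) set \<Rightarrow> bool" where
  "closed_subspace T \<longleftrightarrow> is_subspace T \<and> closed T"

definition rdom :: "('a \<times> 'a) set \<Rightarrow> 'a set" where
  "rdom T = {x. \<exists>f. (x, f) \<in> T}"

definition img :: "('a \<times> 'a) set \<Rightarrow> 'a \<Rightarrow> 'a set" where
  "img T x = {f. (x, f) \<in> T}"

definition adj :: "('a::complex_inner \<times> 'a) set \<Rightarrow> ('a \<times> 'a) set" where
  "adj T = {(y, g). \<forall>x f. (x, f) \<in> T \<longrightarrow> cinner g x = cinner y f}"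

definition hermitian :: "('a::complex_inner \<times> 'a) set \<Rightarrow> bool" where
  "hermitian T \<longleftrightarrow> T \<subseteq> adj T"

definition rel_sum :: "('a::plus \<times> 'a) set \<Rightarrow> ('a \<times> 'a) set \<Rightarrow> ('a \<times> 'a) set" where
  "rel_sum S A = {(x, f + g) | x f g. (x, f) \<in> S \<and> (x, g) \<in> A}"

text \<open>T_infinity and the operator part T_s = T minus-orthogonal T_infinity.\<close>
definition Tinf :: "('a::complex_inner \<times> 'a) set \<Rightarrow> ('a \<times> 'a) set" where
  "Tinf T = {(0, g) | g. (0, g) \<in> T}"

definition Tpart :: "('a::complex_inner \<times> 'a) set \<Rightarrow> ('a \<times> 'a) set" where
  "Tpart T = {p \<in> T. \<forall>q \<in> Tinf T. pinner p q = 0}"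

text \<open>Resolvent set: (lambda I - T)^{-1} is (the graph of) a bounded linear operator defined on all of X.\<close>
definition resolvent_set :: "('a::complex_inner \<times> 'a) set \<Rightarrow> complex set" where
  "resolvent_set T = {l. let R = {(l *\<^sub>C x - f, x) | x f. (x, f) \<in> T} in
       rdom R = UNIV \<and>
       (\<forall>y x x'. (y, x) \<in> R \<longrightarrow> (y, x') \<in> R \<longrightarrow> x = x') \<and>
       (\<exists>C. \<forall>y x. (y, x) \<in> R \<longrightarrow> norm x \<le> C * norm y)}"

definition oproj :: "'a::complex_inner set \<Rightarrow> 'a \<Rightarrow> 'a" where
  "oproj M x = (THE p. p \<in> M \<and> (\<forall>q \<in> M. cinner (x - p) q = 0))"

definition oproj2 :: "('a::complex_inner \<times> 'a) set \<Rightarrow> ('a \<times> 'a) \<Rightarrow> ('a \<times> 'a)" where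
  "oproj2 M z = (THE p. p \<in> M \<and> (\<forall>q \<in> M. pinner (z - p) q = 0))"

definition orth :: "'a::complex_inner set \<Rightarrow> 'a set" where
  "orth M = {x. \<forall>y \<in> M. cinner x y = 0}"

definition reduces :: "'a::complex_inner set \<Rightarrow> ('a \<times> 'a) set \<Rightarrow> bool" where
  "reduces X1 T \<longleftrightarrow> closed X1 \<and> {(oproj X1 x, oproj X1 f) | x f. (x, f) \<in> T} \<subseteq> T"

definition compact_op :: "('a::real_normed_vector \<Rightarrow> 'b::real_normed_vector) \<Rightarrow> bool" where
  "compact_op K \<longleftrightarrow> (\<forall>B. bounded B \<longrightarrow> compact (closure (K ` B)))"

definition compact_perturbation :: "('a::complex_inner \<times> 'a) set \<Rightarrow> ('a \<times> 'a) set \<Rightarrow> bool" where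
  "compact_perturbation T S \<longleftrightarrow> compact_op (\<lambda>z. oproj2 T z - oproj2 S z)"

text \<open>For operators (given by their graphs) U, V with D(V) subset D(U): U is V-compact if
U restricted to D(V) is compact from (D(V), norm x + norm (V x)) into X, i.e. sends
V-norm-bounded subsets of D(V) to relatively compact sets.\<close>
definition rel_compact :: "('a::real_normed_vector \<times> 'a) set \<Rightarrow> ('a \<times> 'a) set \<Rightarrow> bool" where
  "rel_compact U V \<longleftrightarrow> rdom V \<subseteq> rdom U \<and>
     (\<forall>B \<subseteq> V. (\<exists>M. \<forall>x v. (x, v) \<in> B \<longrightarrow> norm x + norm v \<le> M) \<longrightarrow>
        compact (closure {f. \<exists>x v. (x, v) \<in> B \<and> (x, f) \<in> U}))"

definition bounded_rel :: "('a::real_normed_vector \<times> 'a) set \<Rightarrow> bool" where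
  "bounded_rel T \<longleftrightarrow> (\<exists>C. \<forall>x f. (x, f) \<in> T \<longrightarrow> norm f \<le> C * norm x)"

end

theory Submission
  imports Defs
begin


lemma scaleC_zero_left[simp]: "0 *\<^sub>C (x::'a::complex_vector) = 0"
  using scaleR_scaleC[of 0 x] by simp
lemma scaleC_minus1: "(-1) *\<^sub>C (x::'a::complex_vector) = - x"
  using scaleR_scaleC[of "-1" x] by simp
lemma scaleC_zero_right[simp]: "a *\<^sub>C (0::'a::complex_vector) = 0"
  using scaleC_add_right[of a "0::'a" 0] by simp
lemma scaleC_diff_right: "a *\<^sub>C ((x::'a::complex_vector) - y) = a *\<^sub>C x - a *\<^sub>C y"
  using scaleC_add_right[of a "x - y" y] by (simp add: eq_diff_eq)
lemma scaleC_minus_right: "a *\<^sub>C (- (y::'a::complex_vector)) = - (a *\<^sub>C y)"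
  using scaleC_diff_right[of a 0 y] by simp

lemma cinner_add_right: "cinner (x::'a::complex_inner) (y + z) = cinner x y + cinner x z"
  using cinner_conj[of x "y+z"] cinner_conj[of y x] cinner_conj[of z x] by (simp add: cinner_add_left)
lemma cinner_scaleC_right: "cinner (x::'a::complex_inner) (a *\<^sub>C y) = cnj a * cinner x y"
  using cinner_conj[of x "a *\<^sub>C y"] cinner_conj[of y x] by (simp add: cinner_scaleC_left)
lemma cinner_zero_left[simp]: "cinner 0 (y::'a::complex_inner) = 0"
proof -
  have "cinner (0+0) y = cinner 0 y + cinner 0 y" by (rule cinner_add_left)
  then show ?thesis by simp
qed
lemma cinner_zero_right[simp]: "cinner (y::'a::complex_inner) 0 = 0"
  using cinner_conj[of y 0] by simp
lemma cinner_minus_left: "cinner (- (x::'a::complex_inner)) y = - cinner x y"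
  using cinner_add_left[of x "-x" y] by (simp add: eq_neg_iff_add_eq_0 add.commute)
lemma cinner_minus_right: "cinner (y::'a::complex_inner) (- x) = - cinner y x"
  using cinner_conj[of y "-x"] cinner_conj[of x y] by (simp add: cinner_minus_left)
lemma cinner_diff_left: "cinner ((x::'a::complex_inner) - z) y = cinner x y - cinner z y"
  using cinner_add_left[of x "-z" y] by (simp add: cinner_minus_left)
lemma cinner_diff_right: "cinner (y::'a::complex_inner) (x - z) = cinner y x - cinner y z"
  using cinner_add_right[of y x "-z"] by (simp add: cinner_minus_right)
lemma cinner_scaleR_left: "cinner (r *\<^sub>R (x::'a::complex_inner)) y = complex_of_real r * cinner x y"
  by (simp add: scaleR_scaleC cinner_scaleC_left)
lemma cinner_scaleR_right: "cinner (y::'a::complex_inner) (r *\<^sub>R x) = complex_of_real r * cinner y x"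
  by (simp add: scaleR_scaleC cinner_scaleC_right)
lemma norm_sq_cinner: "(norm (x::'a::complex_inner))\<^sup>2 = Re (cinner x x)"
  using norm_cinner[of x] cinner_nonneg(1)[of x] by simp
lemma cinner_self: "cinner (x::'a::complex_inner) x = complex_of_real ((norm x)\<^sup>2)"
proof -
  have "Re (cinner x x) = (norm x)\<^sup>2" using norm_sq_cinner[of x] by simp
  then show ?thesis using cinner_nonneg(2)[of x] by (simp add: complex_eq_iff)
qed
lemma Re_cinner_sym: "Re (cinner (y::'a::complex_inner) x) = Re (cinner x y)"
  using cinner_conj[of y x] by (metis cnj.sel(1))
lemma norm_add_sq: "(norm ((x::'a::complex_inner) + y))\<^sup>2 = (norm x)\<^sup>2 + (norm y)\<^sup>2 + 2 * Re (cinner x y)"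
proof -
  have "(norm (x + y))\<^sup>2 = Re (cinner (x+y) (x+y))" by (rule norm_sq_cinner)
  also have "\<dots> = Re (cinner x x) + Re (cinner y y) + Re (cinner x y) + Re (cinner y x)"
    by (simp add: cinner_add_left cinner_add_right)
  finally show ?thesis using Re_cinner_sym[of y x] norm_sq_cinner[of x] norm_sq_cinner[of y] by linarith
qed
lemma norm_diff_sq: "(norm ((x::'a::complex_inner) - y))\<^sup>2 = (norm x)\<^sup>2 + (norm y)\<^sup>2 - 2 * Re (cinner x y)"
proof -
  have "(norm (x - y))\<^sup>2 = Re (cinner (x-y) (x-y))" by (rule norm_sq_cinner)
  also have "\<dots> = Re (cinner x x) + Re (cinner y y) - Re (cinner x y) - Re (cinner y x)"
    by (simp add: cinner_diff_left cinner_diff_right)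
  finally show ?thesis using Re_cinner_sym[of y x] norm_sq_cinner[of x] norm_sq_cinner[of y] by linarith
qed
lemma cinner_orth_sym: "cinner (x::'a::complex_inner) y = 0 \<longleftrightarrow> cinner y x = 0"
  using cinner_conj[of x y] by auto
lemma Re_cinner_le: "Re (cinner (x::'a::complex_inner) y) \<le> norm x * norm y"
proof (cases "x = 0 \<or> y = 0")
  case True then show ?thesis by auto
next
  case False
  let ?a = "norm x" and ?b = "norm y"
  have ab: "?a * ?b > 0" using False by simp
  have e1: "(norm (?b *\<^sub>R x - ?a *\<^sub>R y))\<^sup>2 = (norm (?b *\<^sub>R x))\<^sup>2 + (norm (?a *\<^sub>R y))\<^sup>2 - 2 * Re (cinner (?b *\<^sub>R x) (?a *\<^sub>R y))"
    by (rule norm_diff_sq)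
  have e2: "Re (cinner (?b *\<^sub>R x) (?a *\<^sub>R y)) = ?b * ?a * Re (cinner x y)"
    by (simp add: cinner_scaleR_left cinner_scaleR_right)
  have e3: "(norm (?b *\<^sub>R x))\<^sup>2 = (?a * ?b)\<^sup>2" "(norm (?a *\<^sub>R y))\<^sup>2 = (?a * ?b)\<^sup>2"
    by (simp_all add: power_mult_distrib)
  have "0 \<le> (norm (?b *\<^sub>R x - ?a *\<^sub>R y))\<^sup>2" by simp
  then have "(?a * ?b) * Re (cinner x y) \<le> (?a * ?b) * (?a * ?b)"
    unfolding e1 e2 e3 by (simp add: power2_eq_square algebra_simps)
  then show ?thesis using mult_le_cancel_left_pos[OF ab] by blast
qed
lemma norm_pyth: "cinner (x::'a::complex_inner) y = 0 \<Longrightarrow> (norm (x + y))\<^sup>2 = (norm x)\<^sup>2 + (norm y)\<^sup>2"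
  by (simp add: norm_add_sq)

instantiation prod :: (complex_vector, complex_vector) complex_vector
begin
definition scaleC_prod_def: "scaleC c z = (scaleC c (fst z), scaleC c (snd z))"
instance by standard (auto simp: scaleC_prod_def scaleC_add_right scaleC_add_left scaleC_scaleC scaleC_one scaleR_scaleC prod_eq_iff)
end

instantiation prod :: (complex_inner, complex_inner) complex_inner
begin
definition cinner_prod_def: "cinner z w = cinner (fst z) (fst w) + cinner (snd z) (snd w)"
instance
proof
  fix x y z :: "'a \<times> 'b" and a :: complex
  show "cinner x y = cnj (cinner y x)" by (simp add: cinner_prod_def cinner_conj[of "fst x"] cinner_conj[of "snd x"])
  show "cinner (x + y) z = cinner x z + cinner y z" by (simp add: cinner_prod_def cinner_add_left)
  show "cinner (a *\<^sub>C x) y = a * cinner x y" by (simp add: cinner_prod_def scaleC_prod_def cinner_scaleC_left algebra_simps)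
  show "Re (cinner x x) \<ge> 0" "Im (cinner x x) = 0"
    using cinner_nonneg[of "fst x"] cinner_nonneg[of "snd x"] by (auto simp: cinner_prod_def)
  show "cinner x x = 0 \<longleftrightarrow> x = 0"
  proof -
    have "cinner x x = complex_of_real ((norm (fst x))\<^sup>2 + (norm (snd x))\<^sup>2)"
      by (simp add: cinner_prod_def cinner_self)
    moreover have "(norm (fst x))\<^sup>2 + (norm (snd x))\<^sup>2 = 0 \<longleftrightarrow> x = 0"
      by (simp add: add_nonneg_eq_0_iff prod_eq_iff)
    ultimately show ?thesis by (metis of_real_eq_0_iff)
  qed
  show "norm x = sqrt (Re (cinner x x))"
  proof -
    have "Re (cinner x x) = (norm (fst x))\<^sup>2 + (norm (snd x))\<^sup>2"
      by (simp add: cinner_prod_def cinner_self)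
    then show ?thesis unfolding norm_prod_def by simp
  qed
qed
end

instance prod :: (chilbert_space, chilbert_space) chilbert_space ..

lemma pinner_eq: "pinner = cinner" by (simp add: fun_eq_iff pinner_def cinner_prod_def)




definition csub :: "'a::complex_vector set \<Rightarrow> bool" where
  "csub M \<longleftrightarrow> 0 \<in> M \<and> (\<forall>x\<in>M. \<forall>y\<in>M. x + y \<in> M) \<and> (\<forall>c. \<forall>x\<in>M. c *\<^sub>C x \<in> M)"

lemma csub_0: "csub M \<Longrightarrow> 0 \<in> M" by (simp add: csub_def)
lemma csub_add: "csub M \<Longrightarrow> x \<in> M \<Longrightarrow> y \<in> M \<Longrightarrow> x + y \<in> M" by (simp add: csub_def)
lemma csub_scaleC: "csub M \<Longrightarrow> x \<in> M \<Longrightarrow> c *\<^sub>C x \<in> M" by (simp add: csub_def)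
lemma csub_minus: "csub M \<Longrightarrow> x \<in> M \<Longrightarrow> - x \<in> M"
  using csub_scaleC[of M x "-1"] by (simp add: scaleC_minus1)
lemma csub_diff: "csub M \<Longrightarrow> x \<in> M \<Longrightarrow> y \<in> M \<Longrightarrow> x - y \<in> M"
  using csub_add[of M x "-y"] csub_minus[of M y] by simp
lemma csub_scaleR: "csub M \<Longrightarrow> x \<in> M \<Longrightarrow> r *\<^sub>R (x::'a::complex_vector) \<in> M"
  by (simp add: scaleR_scaleC csub_scaleC)

lemma norm_cinner_le: "norm (cinner (x::'a::complex_inner) y) \<le> norm x * norm y"
proof (cases "cinner x y = 0")
  case True then show ?thesis by simp
next
  case False
  let ?c = "cinner x y"
  let ?u = "?c / complex_of_real (norm ?c)"
  have "Re (cinner x (?u *\<^sub>C y)) = Re (cnj ?u * ?c)" by (simp add: cinner_scaleC_right)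
  also have "cnj ?u * ?c = (?c * cnj ?c) / complex_of_real (norm ?c)" by simp
  also have "\<dots> = complex_of_real ((norm ?c)\<^sup>2) / complex_of_real (norm ?c)"
    by (simp only: complex_norm_square)
  also have "Re \<dots> = norm ?c" by (simp add: power2_eq_square)
  finally have 1: "norm ?c = Re (cinner x (?u *\<^sub>C y))" by simp
  have "(norm (?u *\<^sub>C y))\<^sup>2 = Re (?u * cnj ?u * cinner y y)"
    by (simp only: norm_sq_cinner cinner_scaleC_left cinner_scaleC_right mult.assoc) (simp only: mult.left_commute)
  also have "?u * cnj ?u = (?c * cnj ?c) / complex_of_real ((norm ?c)\<^sup>2)"
    by (simp add: power2_eq_square)
  also have "\<dots> = 1" using False by (simp only: complex_norm_square[symmetric]) simp
  finally have "(norm (?u *\<^sub>C y))\<^sup>2 = (norm y)\<^sup>2" by (simp add: norm_sq_cinner)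
  then have 2: "norm (?u *\<^sub>C y) = norm y" by (simp add: power2_eq_iff_nonneg)
  show ?thesis using 1 2 Re_cinner_le[of x "?u *\<^sub>C y"] by simp
qed

lemma tendsto_cinner_left:
  fixes f :: "nat \<Rightarrow> 'a::complex_inner"
  assumes "f \<longlonglongrightarrow> l"
  shows "(\<lambda>n. cinner (f n) y) \<longlonglongrightarrow> cinner l y"
proof -
  note cs = norm_cinner_le
  have "(\<lambda>n. f n - l) \<longlonglongrightarrow> 0" using assms by (simp add: LIM_zero)
  then have "(\<lambda>n. cinner (f n) y - cinner l y) \<longlonglongrightarrow> 0"
    by (rule tendsto_0_le[where K="norm y"]) (simp add: cs flip: cinner_diff_left)
  then show ?thesis by (rule LIM_zero_cancel)
qed


lemma parallelogram: "(norm ((a::'a::complex_inner) + b))\<^sup>2 + (norm (a - b))\<^sup>2 = 2 * (norm a)\<^sup>2 + 2 * (norm b)\<^sup>2"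
  using norm_add_sq[of a b] norm_diff_sq[of a b] by simp

lemma aux_real:
  fixes R Q :: real
  assumes Q: "Q \<ge> 0" and h: "2 * (R / (Q + 1)) * R \<le> (R / (Q + 1))\<^sup>2 * Q"
  shows "R = 0"
proof -
  define u where "u = R / (Q + 1)"
  have pos: "Q + 1 > 0" using Q by simp
  have Ru: "R = u * (Q + 1)" using pos unfolding u_def by simp
  have "2 * u * R \<le> u\<^sup>2 * Q" using h unfolding u_def .
  then have "2 * u * (u * (Q + 1)) \<le> u\<^sup>2 * Q" by (subst (asm) Ru)
  then have "u * u * (Q + 2) \<le> 0" by (simp add: power2_eq_square algebra_simps)
  moreover have "Q + 2 > 0" using Q by simp
  ultimately have "u * u \<le> 0" by (simp add: mult_le_0_iff)
  then have "u * u = 0" using zero_le_square[of u] by linarith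
  then have "u = 0" by simp
  then show ?thesis using Ru by simp
qed

lemma min_imp_orth:
  fixes z p :: "'a::complex_inner"
  assumes M: "csub M" and p: "p \<in> M" and min: "\<And>q. q \<in> M \<Longrightarrow> norm (z - p) \<le> norm (z - q)"
    and q: "q \<in> M"
  shows "cinner (z - p) q = 0"
proof -
  have re: "Re (cinner (z - p) q) = 0" if q: "q \<in> M" for q
  proof (rule ccontr)
    assume R0: "Re (cinner (z - p) q) \<noteq> 0"
    let ?R = "Re (cinner (z - p) q)" and ?Q = "(norm q)\<^sup>2"
    let ?t = "?R / (?Q + 1)"
    have "p + ?t *\<^sub>R q \<in> M" using M p q by (simp add: csub_add csub_scaleR)
    then have "norm (z - p) \<le> norm (z - (p + ?t *\<^sub>R q))" by (rule min)
    then have "(norm (z - p))\<^sup>2 \<le> (norm ((z - p) - ?t *\<^sub>R q))\<^sup>2"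
      by (simp add: algebra_simps)
    also have "\<dots> = (norm (z - p))\<^sup>2 + (norm (?t *\<^sub>R q))\<^sup>2 - 2 * Re (cinner (z - p) (?t *\<^sub>R q))"
      by (rule norm_diff_sq)
    also have "(norm (?t *\<^sub>R q))\<^sup>2 = ?t\<^sup>2 * ?Q" by (simp only: norm_scaleR power_mult_distrib power2_abs)
    also have "Re (cinner (z - p) (?t *\<^sub>R q)) = ?t * ?R" by (simp add: cinner_scaleR_right)
    finally have 1: "2 * ?t * ?R \<le> ?t\<^sup>2 * ?Q" by simp
    show False using aux_real[OF _ 1] R0 by simp
  qed
  have "Re (cinner (z - p) ((\<i>) *\<^sub>C q)) = 0" using q M by (intro re) (simp add: csub_scaleC)
  then have "Im (cinner (z - p) q) = 0" by (simp add: cinner_scaleC_right)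
  with re[OF q] show ?thesis by (simp add: complex_eq_iff)
qed

lemma proj_exists:
  fixes z :: "'a::chilbert_space"
  assumes M: "csub M" and cl: "closed M"
  shows "\<exists>p\<in>M. \<forall>q\<in>M. cinner (z - p) q = 0"
proof -
  let ?D = "(\<lambda>q. (norm (z - q))\<^sup>2) ` M"
  define d where "d = Inf ?D"
  have ne: "?D \<noteq> {}" using csub_0[OF M] by auto
  have bdd: "bdd_below ?D" by (rule bdd_belowI[of _ 0]) auto
  have dle: "d \<le> (norm (z - q))\<^sup>2" if "q \<in> M" for q
    unfolding d_def using that bdd by (intro cInf_lower) auto
  have "\<exists>q\<in>M. (norm (z - q))\<^sup>2 < d + 1 / real (Suc n)" for n
  proof -
    have "Inf ?D < d + 1 / real (Suc n)" unfolding d_def by simp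
    from cInf_lessD[OF ne this] show ?thesis by auto
  qed
  then obtain qs where qs: "\<And>n. qs n \<in> M" "\<And>n. (norm (z - qs n))\<^sup>2 < d + 1 / real (Suc n)"
    by metis
  have diff: "(norm (qs m - qs n))\<^sup>2 \<le> 2 / real (Suc m) + 2 / real (Suc n)" for m n
  proof -
    have mid: "(1/2) *\<^sub>R (qs m + qs n) \<in> M" using M qs(1) by (simp add: csub_add csub_scaleR)
    have "(norm ((z - qs m) + (z - qs n)))\<^sup>2 = (norm (2 *\<^sub>R (z - (1/2) *\<^sub>R (qs m + qs n))))\<^sup>2"
      by (simp add: algebra_simps scaleR_add_right scaleR_2)
    also have "\<dots> = 4 * (norm (z - (1/2) *\<^sub>R (qs m + qs n)))\<^sup>2" by (simp add: power_mult_distrib)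
    finally have "(norm ((z - qs m) + (z - qs n)))\<^sup>2 \<ge> 4 * d" using dle[OF mid] by simp
    moreover have "(norm ((z - qs m) + (z - qs n)))\<^sup>2 + (norm ((z - qs m) - (z - qs n)))\<^sup>2
        = 2 * (norm (z - qs m))\<^sup>2 + 2 * (norm (z - qs n))\<^sup>2" by (rule parallelogram)
    moreover have "(z - qs m) - (z - qs n) = qs n - qs m" by simp
    moreover have "norm (qs n - qs m) = norm (qs m - qs n)" by (rule norm_minus_commute)
    ultimately show ?thesis using qs(2)[of m] qs(2)[of n] by simp
  qed
  have "Cauchy qs"
  proof (rule CauchyI)
    fix e :: real assume e: "e > 0"
    obtain N :: nat where N: "4 / e\<^sup>2 < real N" using reals_Archimedean2 by blast
    have "4 / real (Suc N) < e\<^sup>2" using N e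
      by (simp add: divide_simps) (smt (verit) mult.commute of_nat_Suc mult_right_mono zero_le_power2)
    show "\<exists>M. \<forall>m\<ge>M. \<forall>n\<ge>M. norm (qs m - qs n) < e"
    proof (intro exI allI impI)
      fix m n assume m: "m \<ge> N" and n: "n \<ge> N"
      have "2 / real (Suc m) \<le> 2 / real (Suc N)" "2 / real (Suc n) \<le> 2 / real (Suc N)"
        using m n by (simp_all add: frac_le)
      then have "(norm (qs m - qs n))\<^sup>2 < e\<^sup>2" using diff[of m n] \<open>4 / real (Suc N) < e\<^sup>2\<close> by simp
      then show "norm (qs m - qs n) < e" using e by (simp add: power_less_imp_less_base)
    qed
  qed
  then obtain p where lim: "qs \<longlonglongrightarrow> p" using Cauchy_convergent_iff convergent_def by blast
  have pM: "p \<in> M" using cl qs(1) lim closed_sequential_limits by blast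
  have "(\<lambda>n. (norm (z - qs n))\<^sup>2) \<longlonglongrightarrow> (norm (z - p))\<^sup>2"
    by (intro tendsto_intros lim)
  moreover have "(\<lambda>n. d + 1 / real (Suc n)) \<longlonglongrightarrow> d"
  proof -
    have "(\<lambda>n. 1 / (1 + real n)) \<longlonglongrightarrow> 0" using LIMSEQ_Suc[OF lim_inverse_n'] by (simp add: inverse_eq_divide)
    from tendsto_add[OF tendsto_const[of d] this] show ?thesis by simp
  qed
  ultimately have "(norm (z - p))\<^sup>2 \<le> d"
    by (rule LIMSEQ_le) (use qs(2) less_imp_le in blast)
  then have min: "norm (z - p) \<le> norm (z - q)" if "q \<in> M" for q
  proof -
    have "(norm (z - p))\<^sup>2 \<le> (norm (z - q))\<^sup>2" using dle[OF that] \<open>(norm (z - p))\<^sup>2 \<le> d\<close> by linarith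
    then show ?thesis by (rule power2_le_imp_le) simp
  qed
  show ?thesis using min_imp_orth[OF M pM min] pM by blast
qed

lemma proj_unique:
  fixes z :: "'a::complex_inner"
  assumes M: "csub M" and "p \<in> M" "\<forall>q\<in>M. cinner (z - p) q = 0" "p' \<in> M" "\<forall>q\<in>M. cinner (z - p') q = 0"
  shows "p = p'"
proof -
  have "p - p' \<in> M" using assms csub_diff by blast
  then have "cinner (z - p') (p - p') - cinner (z - p) (p - p') = 0" using assms by simp
  then have "cinner (p - p') (p - p') = 0" by (simp add: cinner_diff_left)
  then show ?thesis by (simp add: cinner_eq_zero)
qed

lemma oproj:
  fixes z :: "'a::chilbert_space"
  assumes M: "csub M" and cl: "closed M"
  shows "oproj M z \<in> M" "\<And>q. q \<in> M \<Longrightarrow> cinner (z - oproj M z) q = 0"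
proof -
  have "\<exists>!p. p \<in> M \<and> (\<forall>q\<in>M. cinner (z - p) q = 0)"
    using proj_exists[OF M cl, of z] proj_unique[OF M] by blast
  then have "oproj M z \<in> M \<and> (\<forall>q\<in>M. cinner (z - oproj M z) q = 0)"
    unfolding oproj_def by (rule theI')
  then show "oproj M z \<in> M" "\<And>q. q \<in> M \<Longrightarrow> cinner (z - oproj M z) q = 0" by auto
qed

lemma oproj_eqI:
  fixes z :: "'a::chilbert_space"
  assumes M: "csub M" and cl: "closed M" and "p \<in> M" "\<And>q. q \<in> M \<Longrightarrow> cinner (z - p) q = 0"
  shows "oproj M z = p"
proof -
  have "oproj M z \<in> M" "\<forall>q\<in>M. cinner (z - oproj M z) q = 0" using oproj[OF M cl, where z=z] by auto
  then show ?thesis using proj_unique[OF M] assms by blast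
qed

lemma oproj_id: "csub M \<Longrightarrow> closed M \<Longrightarrow> (q::'a::chilbert_space) \<in> M \<Longrightarrow> oproj M q = q"
  by (rule oproj_eqI) auto

lemma oproj_diff:
  fixes z w :: "'a::chilbert_space"
  assumes M: "csub M" and cl: "closed M"
  shows "oproj M (z - w) = oproj M z - oproj M w"
proof (rule oproj_eqI[OF M cl])
  show "oproj M z - oproj M w \<in> M" using oproj[OF M cl] csub_diff[OF M] by blast
  fix q assume q: "q \<in> M"
  have "z - w - (oproj M z - oproj M w) = (z - oproj M z) - (w - oproj M w)" by simp
  then show "cinner (z - w - (oproj M z - oproj M w)) q = 0"
    using oproj(2)[OF M cl q, where z=z] oproj(2)[OF M cl q, where z=w] by (simp add: cinner_diff_left)
qed

lemma oproj_add:
  fixes z w :: "'a::chilbert_space"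
  assumes M: "csub M" and cl: "closed M"
  shows "oproj M (z + w) = oproj M z + oproj M w"
  using oproj_diff[OF M cl, of "z + w" w] by (simp add: algebra_simps)

lemma oproj_norm_le:
  fixes z :: "'a::chilbert_space"
  assumes M: "csub M" and cl: "closed M" and q: "q \<in> M"
  shows "norm (z - oproj M z) \<le> norm (z - q)"
proof -
  have "oproj M z - q \<in> M" using M q oproj[OF M cl] csub_diff by blast
  then have "cinner (z - oproj M z) (oproj M z - q) = 0" using oproj[OF M cl] by blast
  then have "(norm ((z - oproj M z) + (oproj M z - q)))\<^sup>2 = (norm (z - oproj M z))\<^sup>2 + (norm (oproj M z - q))\<^sup>2"
    by (rule norm_pyth)
  then have "(norm (z - oproj M z))\<^sup>2 \<le> (norm (z - q))\<^sup>2" by simp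
  then show ?thesis by (rule power2_le_imp_le) simp
qed

lemma oproj_norm_le2:
  fixes z :: "'a::chilbert_space"
  assumes M: "csub M" and cl: "closed M"
  shows "norm (oproj M z) \<le> norm z" "norm (z - oproj M z) \<le> norm z"
proof -
  have "cinner (z - oproj M z) (oproj M z) = 0" using oproj[OF M cl] by blast
  then have "(norm ((z - oproj M z) + oproj M z))\<^sup>2 = (norm (z - oproj M z))\<^sup>2 + (norm (oproj M z))\<^sup>2"
    by (rule norm_pyth)
  then have "(norm (oproj M z))\<^sup>2 \<le> (norm z)\<^sup>2" "(norm (z - oproj M z))\<^sup>2 \<le> (norm z)\<^sup>2" by simp_all
  then show "norm (oproj M z) \<le> norm z" "norm (z - oproj M z) \<le> norm z"
    by (auto elim: power2_le_imp_le)
qed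




lemma cs_csub: "closed_subspace T \<Longrightarrow> csub T"
  unfolding closed_subspace_def is_subspace_def csub_def
  by (auto simp: scaleC_prod_def zero_prod_def)

lemma cs_closed: "closed_subspace T \<Longrightarrow> closed T"
  by (simp add: closed_subspace_def)

lemma oproj2_eq: "oproj2 = oproj"
  by (simp add: fun_eq_iff oproj2_def oproj_def pinner_eq)

lemma cs_diff: "closed_subspace T \<Longrightarrow> (x, f) \<in> T \<Longrightarrow> (y, g) \<in> T \<Longrightarrow> (x - y, f - g) \<in> T"
  using csub_diff[OF cs_csub, of T "(x,f)" "(y,g)"] by simp

lemma cs_add: "closed_subspace T \<Longrightarrow> (x, f) \<in> T \<Longrightarrow> (y, g) \<in> T \<Longrightarrow> (x + y, f + g) \<in> T"
  using csub_add[OF cs_csub, of T "(x,f)" "(y,g)"] by simp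

lemma cs_scale: "closed_subspace T \<Longrightarrow> (x, f) \<in> T \<Longrightarrow> (c *\<^sub>C x, c *\<^sub>C f) \<in> T"
  using csub_scaleC[OF cs_csub, of T "(x,f)" c] by (simp add: scaleC_prod_def)

lemma cs_zero: "closed_subspace T \<Longrightarrow> (0, 0) \<in> T"
  using csub_0[OF cs_csub, of T] by (simp add: zero_prod_def)

lemma img_csub: "closed_subspace T \<Longrightarrow> csub (img T 0)"
  unfolding csub_def img_def using cs_add[of T 0 _ 0] cs_scale[of T 0] cs_zero[of T] by auto

lemma img_closed: "closed_subspace T \<Longrightarrow> closed (img T (0::'a::complex_inner))"
proof -
  assume T: "closed_subspace T"
  have "img T 0 = (\<lambda>g. (0::'a, g)) -` T" by (auto simp: img_def)
  moreover have "closed ((\<lambda>g. (0::'a, g)) -` T)"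
    by (rule closed_vimage[OF cs_closed[OF T]]) (intro continuous_intros)
  ultimately show ?thesis by simp
qed

lemma orth_csub: "csub (orth (M::'a::complex_inner set))"
  unfolding csub_def orth_def by (auto simp: cinner_add_left cinner_scaleC_left)

lemma orth_closed: "closed (orth (M::'a::complex_inner set))"
proof -
  have "orth M = (\<Inter>y\<in>M. {x. cinner x y = 0})" by (auto simp: orth_def)
  moreover have "closed {x. cinner x y = (0::complex)}" for y :: 'a
    unfolding closed_sequential_limits
  proof (intro allI impI)
    fix s l assume "(\<forall>n. s n \<in> {x. cinner x y = 0}) \<and> s \<longlonglongrightarrow> l"
    then have "(\<lambda>n. cinner (s n) y) \<longlonglongrightarrow> cinner l y" "\<forall>n. cinner (s n) y = 0"
      using tendsto_cinner_left[of s l y] by auto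
    then have "(\<lambda>n. 0) \<longlonglongrightarrow> cinner l y" by simp
    then have "cinner l y = 0" using LIMSEQ_unique[OF _ tendsto_const] by metis
    then show "l \<in> {x. cinner x y = 0}" by simp
  qed
  ultimately show ?thesis by auto
qed

lemma Tpart_iff: "p \<in> Tpart T \<longleftrightarrow> p \<in> T \<and> (\<forall>g\<in>img T 0. cinner (snd p) g = 0)"
  by (cases p) (auto simp: Tpart_def Tinf_def img_def pinner_def)

lemma Tpart_sub: "Tpart T \<subseteq> T" by (auto simp: Tpart_def)

lemma decomp:
  fixes T :: "('a::chilbert_space \<times> 'a) set"
  assumes T: "closed_subspace T" and xf: "(x, f) \<in> T"
  shows "(x, f - oproj (img T 0) f) \<in> Tpart T" "norm (f - oproj (img T 0) f) \<le> norm f"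
proof -
  note M = img_csub[OF T] img_closed[OF T]
  have "oproj (img T 0) f \<in> img T 0" by (rule oproj(1)[OF M])
  then have "(0, oproj (img T 0) f) \<in> T" by (simp add: img_def)
  from cs_diff[OF T xf this] have "(x, f - oproj (img T 0) f) \<in> T" by simp
  then show "(x, f - oproj (img T 0) f) \<in> Tpart T" using oproj(2)[OF M] by (simp add: Tpart_iff)
  show "norm (f - oproj (img T 0) f) \<le> norm f" by (rule oproj_norm_le2(2)[OF M])
qed

lemma dom_Tpart: "closed_subspace T \<Longrightarrow> rdom (Tpart T) = rdom (T::('a::chilbert_space \<times> 'a) set)"
  unfolding rdom_def using decomp(1) Tpart_sub by fastforce

lemma compact_closure_seq:
  fixes F :: "'b::{real_normed_vector, complete_space} set" and s :: "nat \<Rightarrow> 'b"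
  assumes "compact (closure F)" "\<And>n. s n \<in> F"
  shows "\<exists>r::nat\<Rightarrow>nat. strict_mono r \<and> Cauchy (s \<circ> r)"
proof -
  have sc: "seq_compact (closure F)" using assms(1) compact_eq_seq_compact_metric by blast
  have sF: "\<forall>n. s n \<in> closure F" using assms(2) closure_subset by blast
  have "\<exists>l\<in>closure F. \<exists>r::nat\<Rightarrow>nat. strict_mono r \<and> (s \<circ> r) \<longlonglongrightarrow> l"
    using sc sF unfolding seq_compact_def by blast
  then obtain l r where "strict_mono r" "(s \<circ> r) \<longlonglongrightarrow> l" by blast
  then show ?thesis using LIMSEQ_imp_Cauchy by blast
qed

lemma seq_compact_closure:
  fixes F :: "'b::{real_normed_vector, complete_space} set"
  assumes H: "\<And>s::nat\<Rightarrow>'b. (\<And>n. s n \<in> F) \<Longrightarrow> \<exists>r::nat\<Rightarrow>nat. strict_mono r \<and> Cauchy (s \<circ> r)"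
  shows "compact (closure F)"
  unfolding compact_eq_seq_compact_metric seq_compact_def
proof (intro allI impI)
  fix t :: "nat \<Rightarrow> 'b" assume t: "\<forall>n. t n \<in> closure F"
  have ex: "\<forall>n. \<exists>y. y \<in> F \<and> dist y (t n) < 1 / real (Suc n)"
  proof
    fix n
    have "(1::real) / real (Suc n) > 0" by simp
    then show "\<exists>y. y \<in> F \<and> dist y (t n) < 1 / real (Suc n)"
      using t closure_approachable[of "t n" F] by blast
  qed
  then obtain s where s0: "\<forall>n. s n \<in> F \<and> dist (s n) (t n) < 1 / real (Suc n)"
    using choice[OF ex] by blast
  then have s: "\<And>n. s n \<in> F" "\<And>n. dist (s n) (t n) < 1 / real (Suc n)" by auto
  have "\<exists>r::nat\<Rightarrow>nat. strict_mono r \<and> Cauchy (s \<circ> r)" by (rule H) (rule s(1))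
  then obtain r :: "nat \<Rightarrow> nat" where r: "strict_mono r" "Cauchy (s \<circ> r)" by blast
  from r(2) have "convergent (s \<circ> r)" by (simp add: Cauchy_convergent_iff)
  then obtain l where l: "(s \<circ> r) \<longlonglongrightarrow> l" unfolding convergent_def by blast
  have "(\<lambda>n. t (r n) - s (r n)) \<longlonglongrightarrow> 0"
  proof (rule tendsto_0_le[where K=1])
    show "(\<lambda>n. 1 / real (Suc n)) \<longlonglongrightarrow> 0" using LIMSEQ_Suc[OF lim_inverse_n'] by (simp add: inverse_eq_divide)
    show "\<forall>\<^sub>F n in sequentially. norm (t (r n) - s (r n)) \<le> norm (1 / real (Suc n)) * 1"
    proof (intro always_eventually allI)
      fix n
      have "norm (t (r n) - s (r n)) < 1 / real (Suc (r n))" using s(2)[of "r n"] by (simp add: dist_norm norm_minus_commute)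
      also have "\<dots> \<le> 1 / real (Suc n)" using seq_suble[OF r(1), of n] by (simp add: frac_le)
      finally show "norm (t (r n) - s (r n)) \<le> norm (1 / real (Suc n)) * 1" by simp
    qed
  qed
  from tendsto_add[OF this l] have "(t \<circ> r) \<longlonglongrightarrow> l" by (simp add: o_def)
  moreover have "l \<in> closure F"
  proof -
    have "closed (closure F)" by simp
    then have "\<forall>x l. (\<forall>n. x n \<in> closure F) \<and> x \<longlonglongrightarrow> l \<longrightarrow> l \<in> closure F"
      by (simp add: closed_sequential_limits)
    moreover have "\<forall>n. (t \<circ> r) n \<in> closure F" using t by simp
    ultimately show ?thesis using \<open>(t \<circ> r) \<longlonglongrightarrow> l\<close> by blast
  qed
  ultimately show "\<exists>l\<in>closure F. \<exists>r. strict_mono r \<and> (t \<circ> r) \<longlonglongrightarrow> l" using r(1) by blast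
qed

lemma Cauchy_le:
  fixes X :: "nat \<Rightarrow> 'b::real_normed_vector" and Y :: "nat \<Rightarrow> 'c::real_normed_vector"
  assumes Y: "Cauchy Y" and le: "\<And>m n. norm (X m - X n) \<le> K * norm (Y m - Y n)"
  shows "Cauchy X"
proof (rule CauchyI)
  fix e :: real assume e: "e > 0"
  let ?K = "max K 1"
  have "e / ?K > 0" using e by simp
  then obtain M where M: "\<forall>m\<ge>M. \<forall>n\<ge>M. norm (Y m - Y n) < e / ?K" using Y Cauchy_iff by blast
  show "\<exists>M. \<forall>m\<ge>M. \<forall>n\<ge>M. norm (X m - X n) < e"
  proof (intro exI allI impI)
    fix m n assume "m \<ge> M" "n \<ge> M"
    then have "norm (Y m - Y n) < e / ?K" using M by blast
    then have "?K * norm (Y m - Y n) < e" by (simp add: field_simps)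
    moreover have "K * norm (Y m - Y n) \<le> ?K * norm (Y m - Y n)" by (intro mult_right_mono) auto
    ultimately show "norm (X m - X n) < e" using le[of m n] by linarith
  qed
qed

lemma Cauchy_sq_le:
  fixes X :: "nat \<Rightarrow> 'b::real_normed_vector" and Y :: "nat \<Rightarrow> 'c::real_normed_vector"
  assumes Y: "Cauchy Y" and le: "\<And>m n. (norm (X m - X n))\<^sup>2 \<le> K * norm (Y m - Y n)"
  shows "Cauchy X"
proof (rule CauchyI)
  fix e :: real assume e: "e > 0"
  let ?K = "max K 1"
  have "e\<^sup>2 / ?K > 0" using e by simp
  then obtain M where M: "\<forall>m\<ge>M. \<forall>n\<ge>M. norm (Y m - Y n) < e\<^sup>2 / ?K" using Y Cauchy_iff by blast
  show "\<exists>M. \<forall>m\<ge>M. \<forall>n\<ge>M. norm (X m - X n) < e"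
  proof (intro exI allI impI)
    fix m n assume "m \<ge> M" "n \<ge> M"
    then have "norm (Y m - Y n) < e\<^sup>2 / ?K" using M by blast
    then have "?K * norm (Y m - Y n) < e\<^sup>2" by (simp add: field_simps)
    moreover have "K * norm (Y m - Y n) \<le> ?K * norm (Y m - Y n)" by (intro mult_right_mono) auto
    ultimately have "(norm (X m - X n))\<^sup>2 < e\<^sup>2" using le[of m n] by linarith
    then show "norm (X m - X n) < e" using e by (simp add: power_less_imp_less_base)
  qed
qed

lemma Cauchy_add2:
  fixes X Y :: "nat \<Rightarrow> 'b::{real_normed_vector,complete_space}"
  assumes "Cauchy X" "Cauchy Y" shows "Cauchy (\<lambda>n. X n + Y n)"
  using assms by (metis Cauchy_convergent_iff convergent_add)




lemma red_in:
  fixes A :: "('a::chilbert_space \<times> 'a) set"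
  assumes A: "closed_subspace A" and red: "reduces (orth M) A" and sub: "img A 0 \<subseteq> M"
    and x: "x \<in> orth M" and xf: "(x, f) \<in> Tpart A"
  shows "f \<in> orth M"
proof -
  let ?H = "orth M" and ?Q = "oproj (orth M)"
  note H = orth_csub[of M] orth_closed[of M]
  have Qx: "?Q x = x" by (rule oproj_id[OF H x])
  have "(?Q x, ?Q f) \<in> A" using red xf Tpart_sub unfolding reduces_def by blast
  then have "(x, ?Q f) \<in> A" using Qx by simp
  from cs_diff[OF A _ this] xf Tpart_sub have "(x - x, f - ?Q f) \<in> A" by blast
  then have d: "f - ?Q f \<in> img A 0" by (simp add: img_def)
  then have 1: "cinner f (f - ?Q f) = 0" using xf by (simp add: Tpart_iff)
  have "?Q f \<in> ?H" by (rule oproj(1)[OF H])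
  then have 2: "cinner (?Q f) (f - ?Q f) = 0" using d sub by (auto simp: orth_def)
  have "cinner (f - ?Q f) (f - ?Q f) = 0" using 1 2 by (simp add: cinner_diff_left)
  then have "f = ?Q f" by (simp add: cinner_eq_zero)
  then show ?thesis using \<open>?Q f \<in> ?H\<close> by simp
qed

lemma herm_dom_orth:
  fixes T :: "('a::chilbert_space \<times> 'a) set"
  assumes h: "hermitian T" and xt: "(x, t) \<in> T"
  shows "x \<in> orth (img T 0)"
  unfolding orth_def mem_Collect_eq
proof (intro ballI)
  fix m assume "m \<in> img T 0"
  then have "(0, m) \<in> adj T" using h by (auto simp: hermitian_def img_def)
  then have "cinner m x = cinner 0 t" using xt by (auto simp: adj_def)
  then show "cinner x m = 0" by (simp add: cinner_orth_sym)
qed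

lemma img_sum_sub:
  assumes "closed_subspace S" "closed_subspace A" "T = rel_sum S A"
  shows "img S 0 \<subseteq> img T 0" "img A 0 \<subseteq> img T 0"
proof -
  show "img S 0 \<subseteq> img T 0"
  proof
    fix m assume "m \<in> img S 0"
    then have "(0, m + 0) \<in> rel_sum S A" using cs_zero[OF assms(2)] unfolding rel_sum_def img_def by blast
    then show "m \<in> img T 0" using assms(3) by (simp add: img_def)
  qed
  show "img A 0 \<subseteq> img T 0"
  proof
    fix m assume "m \<in> img A 0"
    then have "(0, 0 + m) \<in> rel_sum S A" using cs_zero[OF assms(1)] unfolding rel_sum_def img_def by blast
    then show "m \<in> img T 0" using assms(3) by (simp add: img_def)
  qed
qed

lemma ii_key:
  fixes T S A :: "('a::chilbert_space \<times> 'a) set"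
  assumes T: "closed_subspace T" and S: "closed_subspace S" and A: "closed_subspace A"
    and hT: "hermitian T" and sum: "T = rel_sum S A"
    and rS: "reduces (orth (img T 0)) S" and rA: "reduces (orth (img T 0)) A"
    and xv: "(x, v) \<in> Tpart S" and xf: "(x, f) \<in> Tpart A" and xt: "(x, t) \<in> Tpart T"
  shows "f = t - v" "f \<in> orth (img T 0)"
proof -
  let ?H = "orth (img T 0)"
  have x: "x \<in> ?H" using herm_dom_orth[OF hT] xt Tpart_sub by blast
  note subs = img_sum_sub[OF S A sum]
  show fH: "f \<in> ?H" by (rule red_in[OF A rA subs(2) x xf])
  have vH: "v \<in> ?H" by (rule red_in[OF S rS subs(1) x xv])
  have tH: "t \<in> ?H" using xt by (auto simp: Tpart_iff orth_def)
  have "(x, v + f) \<in> T" using xv xf Tpart_sub sum by (auto simp: rel_sum_def)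
  from cs_diff[OF T this] xt Tpart_sub have "(x - x, v + f - t) \<in> T" by blast
  then have m: "v + f - t \<in> img T 0" by (simp add: img_def)
  have "v + f - t \<in> ?H" using vH fH tH orth_csub by (meson csub_add csub_diff)
  then have "cinner (v + f - t) (v + f - t) = 0" using m by (simp add: orth_def)
  then have "v + f - t = 0" by (simp add: cinner_eq_zero)
  then show "f = t - v" by (simp add: algebra_simps)
qed

lemma lower_bound:
  fixes T :: "('a::chilbert_space \<times> 'a) set"
  assumes T: "closed_subspace T" and bd: "\<And>x f. (x, f) \<in> Tpart T \<Longrightarrow> norm f \<le> K * norm x"
    and K: "K \<ge> 0" and h: "h \<in> orth (img T 0)"
  shows "norm h \<le> (1 + K) * norm ((0, h) - oproj T (0, h))"
proof -
  note TT = cs_csub[OF T] cs_closed[OF T]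
  note I = img_csub[OF T] img_closed[OF T]
  obtain x' g' where p: "oproj T (0, h) = (x', g')" by fastforce
  have "(x', g') \<in> T" using oproj(1)[OF TT, where z="(0,h)"] p by simp
  let ?m = "oproj (img T 0) g'"
  let ?t = "g' - ?m"
  have tp: "(x', ?t) \<in> Tpart T" using decomp(1)[OF T \<open>(x', g') \<in> T\<close>] .
  have tb: "norm ?t \<le> K * norm x'" using bd[OF tp] .
  have tH: "?t \<in> orth (img T 0)" using tp by (auto simp: Tpart_iff orth_def)
  have mI: "?m \<in> img T 0" by (rule oproj(1)[OF I])
  have "h - ?t \<in> orth (img T 0)" using h tH orth_csub csub_diff by blast
  then have "cinner (h - ?t) (- ?m) = 0" using mI by (simp add: orth_def cinner_minus_right)
  then have "(norm ((h - ?t) + (- ?m)))\<^sup>2 = (norm (h - ?t))\<^sup>2 + (norm (- ?m))\<^sup>2" by (rule norm_pyth)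
  moreover have "(h - ?t) + (- ?m) = h - g'" by simp
  ultimately have "(norm (h - ?t))\<^sup>2 \<le> (norm (h - g'))\<^sup>2" by simp
  then have 1: "norm (h - ?t) \<le> norm (h - g')" by (rule power2_le_imp_le) simp
  have E: "(0, h) - oproj T (0, h) = (- x', h - g')" using p by simp
  have 2: "norm x' \<le> norm ((0, h) - oproj T (0, h))" unfolding E using norm_fst_le[of "- x'" "h - g'"] by simp
  have 3: "norm (h - g') \<le> norm ((0, h) - oproj T (0, h))" unfolding E by (rule norm_snd_le)
  have "norm h \<le> norm (h - ?t) + norm ?t" using norm_triangle_ineq[of "h - ?t" ?t] by simp
  also have "\<dots> \<le> norm ((0, h) - oproj T (0, h)) + K * norm ((0, h) - oproj T (0, h))"
    using 1 3 tb 2 K by (meson add_mono dual_order.trans mult_left_mono)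
  finally show ?thesis by (simp add: algebra_simps)
qed




lemma E_diff:
  fixes T :: "('a::chilbert_space \<times> 'a) set"
  assumes T: "closed_subspace T"
  shows "(0, a - b) - oproj T (0, a - b) = ((0, a) - oproj T (0, a)) - ((0, b) - oproj T (0, b))"
proof -
  have "(0::'a, a - b) = (0, a) - (0, b)" by simp
  then have "oproj T (0, a - b) = oproj T (0, a) - oproj T (0, b)"
    using oproj_diff[OF cs_csub[OF T] cs_closed[OF T], of "(0,a)" "(0,b)"] by simp
  then show ?thesis by simp
qed

lemma part_ii:
  fixes T S A :: "('a::chilbert_space \<times> 'a) set"
  assumes T: "closed_subspace T" and S: "closed_subspace S" and A: "closed_subspace A"
    and hT: "hermitian T" and dTS: "rdom T = rdom S" and dSA: "rdom S \<subseteq> rdom A"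
    and sum: "T = rel_sum S A"
    and cp: "compact_perturbation T S" and rS: "reduces (orth (img T 0)) S"
    and rA: "reduces (orth (img T 0)) A" and bT: "bounded_rel (Tpart T)"
  shows "rel_compact (Tpart A) (Tpart S)"
proof -
  obtain C where C: "\<And>x f. (x, f) \<in> Tpart T \<Longrightarrow> norm f \<le> C * norm x"
    using bT unfolding bounded_rel_def by blast
  define K where "K = \<bar>C\<bar>"
  have K: "K \<ge> 0" by (simp add: K_def)
  have bd: "norm f \<le> K * norm x" if "(x, f) \<in> Tpart T" for x f
  proof -
    have "C * norm x \<le> K * norm x" unfolding K_def by (intro mult_right_mono) auto
    then show ?thesis using C[OF that] by linarith
  qed
  define E where "E h = (0, h) - oproj T (0, h)" for h
  have Ediff: "E a - E b = E (a - b)" for a b unfolding E_def using E_diff[OF T, of a b] by simp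
  have dom: "rdom (Tpart S) \<subseteq> rdom (Tpart A)" using dom_Tpart[OF S] dom_Tpart[OF A] dSA by simp
  show ?thesis unfolding rel_compact_def
  proof (intro conjI allI impI)
    show "rdom (Tpart S) \<subseteq> rdom (Tpart A)" by (rule dom)
    fix B assume B: "B \<subseteq> Tpart S" and "\<exists>M. \<forall>x v. (x, v) \<in> B \<longrightarrow> norm x + norm v \<le> M"
    then obtain M where Mb: "\<And>x v. (x, v) \<in> B \<Longrightarrow> norm x + norm v \<le> M" by blast
    let ?F = "{f. \<exists>x v. (x, v) \<in> B \<and> (x, f) \<in> Tpart A}"
    show "compact (closure ?F)"
    proof (rule seq_compact_closure)
      fix s :: "nat \<Rightarrow> 'a" assume s: "\<And>n. s n \<in> ?F"
      have "\<forall>n. \<exists>p. p \<in> B \<and> (fst p, s n) \<in> Tpart A" using s by fastforce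
      then obtain ps where ps: "\<And>n. ps n \<in> B" "\<And>n. (fst (ps n), s n) \<in> Tpart A"
        using choice by metis
      define xs where "xs n = fst (ps n)" for n
      define vs where "vs n = snd (ps n)" for n
      have xvB: "(xs n, vs n) \<in> B" for n using ps(1)[of n] by (simp add: xs_def vs_def)
      have xsA: "(xs n, s n) \<in> Tpart A" for n using ps(2)[of n] by (simp add: xs_def)
      have "\<forall>n. \<exists>t. (xs n, t) \<in> Tpart T"
      proof
        fix n
        have "xs n \<in> rdom (Tpart S)" using xvB[of n] B unfolding rdom_def by blast
        then have "xs n \<in> rdom (Tpart T)" using dom_Tpart[OF S] dom_Tpart[OF T] dTS by simp
        then show "\<exists>t. (xs n, t) \<in> Tpart T" by (simp add: rdom_def)
      qed
      then obtain ts where ts: "\<And>n. (xs n, ts n) \<in> Tpart T" using choice by metis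
      have key: "s n = ts n - vs n" "s n \<in> orth (img T 0)" for n
        using ii_key[OF T S A hT sum rS rA _ xsA ts, of n "vs n"] xvB[of n] B by auto
      let ?K = "\<lambda>z. oproj2 T z - oproj2 S z"
      have KE: "?K (xs n, vs n) = E (s n)" for n
      proof -
        have xvS: "(xs n, vs n) \<in> S" using xvB[of n] B Tpart_sub by blast
        have xtT: "(xs n, ts n) \<in> T" using ts[of n] Tpart_sub by blast
        have PS: "oproj S (xs n, vs n) = (xs n, vs n)" by (rule oproj_id[OF cs_csub[OF S] cs_closed[OF S] xvS])
        have eq: "(xs n, vs n) = (xs n, ts n) - (0, s n)" using key(1)[of n] by simp
        have "oproj T ((xs n, ts n) - (0, s n)) = (xs n, ts n) - oproj T (0, s n)"
          by (subst oproj_diff[OF cs_csub[OF T] cs_closed[OF T]]) (simp only: oproj_id[OF cs_csub[OF T] cs_closed[OF T] xtT])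
        then have PT: "oproj T (xs n, vs n) = (xs n, ts n) - oproj T (0, s n)" by (simp only: eq[symmetric])
        show ?thesis unfolding oproj2_eq E_def PS PT using key(1)[of n] by (simp add: prod_eq_iff)
      qed
      have bnd: "bounded {z::'a \<times> 'a. norm z \<le> M}" by (auto simp: bounded_iff)
      have cpt: "compact (closure (?K ` {z. norm z \<le> M}))"
        using cp bnd unfolding compact_perturbation_def compact_op_def by blast
      have inK: "E (s n) \<in> ?K ` {z. norm z \<le> M}" for n
      proof -
        have "norm (xs n, vs n) \<le> M" using norm_Pair_le[of "xs n" "vs n"] Mb[OF xvB[of n]] by linarith
        then show ?thesis using KE[of n] by (metis (mono_tags, lifting) image_eqI mem_Collect_eq)
      qed
      obtain r :: "nat \<Rightarrow> nat" where r: "strict_mono r" "Cauchy ((\<lambda>n. E (s n)) \<circ> r)"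
        using compact_closure_seq[OF cpt, of "\<lambda>n. E (s n)"] inK by blast
      have "Cauchy (s \<circ> r)"
      proof (rule Cauchy_le[OF r(2), where K="1 + K"])
        fix m n
        have "s (r m) - s (r n) \<in> orth (img T 0)" using key(2) orth_csub csub_diff by blast
        from lower_bound[OF T bd K this]
        have "norm (s (r m) - s (r n)) \<le> (1 + K) * norm (E (s (r m) - s (r n)))" unfolding E_def by blast
        then show "norm ((s \<circ> r) m - (s \<circ> r) n) \<le> (1 + K) * norm (((\<lambda>n. E (s n)) \<circ> r) m - ((\<lambda>n. E (s n)) \<circ> r) n)"
          by (simp add: Ediff)
      qed
      then show "\<exists>r::nat\<Rightarrow>nat. strict_mono r \<and> Cauchy (s \<circ> r)" using r(1) by blast
    qed
  qed
qed




lemma norm_scaleC: "norm (c *\<^sub>C (x::'a::complex_inner)) = norm c * norm x"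
proof -
  have "(norm (c *\<^sub>C x))\<^sup>2 = Re (c * (cnj c * cinner x x))"
    by (simp only: norm_sq_cinner cinner_scaleC_left cinner_scaleC_right) (simp only: mult.left_commute)
  also have "c * (cnj c * cinner x x) = complex_of_real ((norm c)\<^sup>2 * (norm x)\<^sup>2)"
    by (simp only: mult.assoc[symmetric] complex_norm_square[symmetric] cinner_self of_real_mult)
  finally have "(norm (c *\<^sub>C x))\<^sup>2 = (norm c * norm x)\<^sup>2" by (simp add: power_mult_distrib)
  then show ?thesis by (simp add: power2_eq_iff_nonneg)
qed

lemma resolvent_facts:
  fixes T :: "('a::chilbert_space \<times> 'a) set"
  assumes l: "l \<in> resolvent_set T"
  shows "\<And>y. \<exists>x f. (x, f) \<in> T \<and> y = l *\<^sub>C x - f"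
    and "\<And>x f x' f'. (x, f) \<in> T \<Longrightarrow> (x', f') \<in> T \<Longrightarrow> l *\<^sub>C x - f = l *\<^sub>C x' - f' \<Longrightarrow> x = x'"
    and "\<exists>C\<ge>0. \<forall>x f. (x, f) \<in> T \<longrightarrow> norm x \<le> C * norm (l *\<^sub>C x - f)"
proof -
  let ?R = "{(l *\<^sub>C x - f, x) | x f. (x, f) \<in> T}"
  have R: "rdom ?R = UNIV" "\<forall>y x x'. (y, x) \<in> ?R \<longrightarrow> (y, x') \<in> ?R \<longrightarrow> x = x'"
    "\<exists>C. \<forall>y x. (y, x) \<in> ?R \<longrightarrow> norm x \<le> C * norm y"
    using l unfolding resolvent_set_def Let_def by blast+
  show "\<exists>x f. (x, f) \<in> T \<and> y = l *\<^sub>C x - f" for y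
  proof -
    have "y \<in> rdom ?R" using R(1) by simp
    then show ?thesis unfolding rdom_def by blast
  qed
  show "x = x'" if "(x, f) \<in> T" "(x', f') \<in> T" "l *\<^sub>C x - f = l *\<^sub>C x' - f'" for x f x' f'
  proof -
    have "(l *\<^sub>C x - f, x) \<in> ?R" using that(1) by blast
    moreover have "(l *\<^sub>C x' - f', x') \<in> ?R" using that(2) by blast
    ultimately have "(l *\<^sub>C x - f, x) \<in> ?R" "(l *\<^sub>C x - f, x') \<in> ?R" using that(3) by simp_all
    then show ?thesis using R(2) by blast
  qed
  obtain C where C: "\<And>y x. (y, x) \<in> ?R \<Longrightarrow> norm x \<le> C * norm y" using R(3) by blast
  show "\<exists>C\<ge>0. \<forall>x f. (x, f) \<in> T \<longrightarrow> norm x \<le> C * norm (l *\<^sub>C x - f)"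
  proof (intro exI[of _ "\<bar>C\<bar>"] conjI allI impI)
    fix x f assume "(x, f) \<in> T"
    then have "norm x \<le> C * norm (l *\<^sub>C x - f)" using C by blast
    also have "\<dots> \<le> \<bar>C\<bar> * norm (l *\<^sub>C x - f)" by (intro mult_right_mono) auto
    finally show "norm x \<le> \<bar>C\<bar> * norm (l *\<^sub>C x - f)" .
  qed simp
qed

definition RT :: "('a::complex_inner \<times> 'a) set \<Rightarrow> complex \<Rightarrow> 'a \<Rightarrow> 'a" where
  "RT T l y = (THE x. \<exists>f. (x, f) \<in> T \<and> y = l *\<^sub>C x - f)"

lemma RT_spec:
  fixes T :: "('a::chilbert_space \<times> 'a) set"
  assumes l: "l \<in> resolvent_set T"
  shows "\<exists>f. (RT T l y, f) \<in> T \<and> y = l *\<^sub>C RT T l y - f"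
proof -
  note rf = resolvent_facts[OF l]
  have "\<exists>!x. \<exists>f. (x, f) \<in> T \<and> y = l *\<^sub>C x - f"
    using rf(1)[of y] rf(2) by metis
  then show ?thesis unfolding RT_def by (rule theI')
qed

lemma RT_eq:
  fixes T :: "('a::chilbert_space \<times> 'a) set"
  assumes l: "l \<in> resolvent_set T" and "(x, f) \<in> T" and "y = l *\<^sub>C x - f"
  shows "RT T l y = x"
proof -
  obtain f' where "(RT T l y, f') \<in> T" "y = l *\<^sub>C RT T l y - f'" using RT_spec[OF l] by blast
  then show ?thesis using resolvent_facts(2)[OF l] assms(2,3) by metis
qed

lemma RT_diff:
  fixes T :: "('a::chilbert_space \<times> 'a) set"
  assumes T: "closed_subspace T" and l: "l \<in> resolvent_set T"
  shows "RT T l (a - b) = RT T l a - RT T l b"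
proof -
  obtain fa where a: "(RT T l a, fa) \<in> T" "a = l *\<^sub>C RT T l a - fa" using RT_spec[OF l] by blast
  obtain fb where b: "(RT T l b, fb) \<in> T" "b = l *\<^sub>C RT T l b - fb" using RT_spec[OF l] by blast
  have "(RT T l a - RT T l b, fa - fb) \<in> T" by (rule cs_diff[OF T a(1) b(1)])
  moreover have "a - b = l *\<^sub>C (RT T l a - RT T l b) - (fa - fb)"
  proof -
    have "a - b = (l *\<^sub>C RT T l a - fa) - (l *\<^sub>C RT T l b - fb)" using a(2) b(2) by simp
    then show ?thesis by (simp add: scaleC_diff_right)
  qed
  ultimately show ?thesis by (rule RT_eq[OF l])
qed

lemma RT_bound:
  fixes T :: "('a::chilbert_space \<times> 'a) set"
  assumes l: "l \<in> resolvent_set T"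
  shows "\<exists>C\<ge>0. \<forall>y. norm (RT T l y) \<le> C * norm y"
proof -
  obtain C where C: "C \<ge> 0" "\<And>x f. (x, f) \<in> T \<Longrightarrow> norm x \<le> C * norm (l *\<^sub>C x - f)"
    using resolvent_facts(3)[OF l] by blast
  show ?thesis
  proof (intro exI[of _ C] conjI allI)
    fix y
    obtain f where "(RT T l y, f) \<in> T" "y = l *\<^sub>C RT T l y - f" using RT_spec[OF l] by blast
    then show "norm (RT T l y) \<le> C * norm y" using C(2) by metis
  qed (rule C(1))
qed




lemma term1:
  fixes T S A :: "('a::chilbert_space \<times> 'a) set"
  assumes T: "closed_subspace T" and S: "closed_subspace S" and A: "closed_subspace A"
    and dSA: "rdom S \<subseteq> rdom A" and sum: "T = rel_sum S A" and xf: "(x, f) \<in> S"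
  shows "\<exists>g s. (x, s) \<in> Tpart S \<and> norm s \<le> norm f \<and> (x, g) \<in> Tpart A
            \<and> oproj T (x, f) - (x, f) = (0, g) - oproj T (0, g)"
proof -
  obtain s where s: "(x, s) \<in> Tpart S" "norm s \<le> norm f" using decomp[OF S xf] by blast
  have "x \<in> rdom (Tpart A)" using xf dSA dom_Tpart[OF A] unfolding rdom_def by blast
  then obtain g where g: "(x, g) \<in> Tpart A" unfolding rdom_def by blast
  have xfg: "(x, f + g) \<in> T" using xf g Tpart_sub sum unfolding rel_sum_def by blast
  have "(x, f) = (x, f + g) - (0, g)" by simp
  then have "oproj T (x, f) = oproj T ((x, f + g) - (0, g))" by simp
  also have "\<dots> = (x, f + g) - oproj T (0, g)"
    by (subst oproj_diff[OF cs_csub[OF T] cs_closed[OF T]]) (simp only: oproj_id[OF cs_csub[OF T] cs_closed[OF T] xfg])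
  finally have "oproj T (x, f) - (x, f) = (0, g) - oproj T (0, g)" by (simp add: prod_eq_iff)
  then show ?thesis using s g by blast
qed

lemma term2:
  fixes T S A :: "('a::chilbert_space \<times> 'a) set"
  assumes T: "closed_subspace T" and S: "closed_subspace S" and A: "closed_subspace A"
    and dSA: "rdom S \<subseteq> rdom A" and sum: "T = rel_sum S A"
    and lT: "l \<in> resolvent_set T" and lS: "l \<in> resolvent_set S"
    and CS: "\<And>x f. (x, f) \<in> S \<Longrightarrow> norm x \<le> CS * norm (l *\<^sub>C x - f)"
    and xf2: "(x2, f2) \<in> T"
  shows "\<exists>x3 s3 g3. (x3, s3) \<in> Tpart S \<and> (x3, g3) \<in> Tpart A
     \<and> norm x3 \<le> CS * norm (l *\<^sub>C x2 - f2) \<and> norm s3 \<le> norm l * norm x3 + norm (l *\<^sub>C x2 - f2)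
     \<and> (x2, f2) - oproj S (x2, f2) = (RT T l g3, l *\<^sub>C RT T l g3) - oproj S (RT T l g3, l *\<^sub>C RT T l g3)"
proof -
  define y where "y = l *\<^sub>C x2 - f2"
  obtain x3 f3 where xf3: "(x3, f3) \<in> S" "y = l *\<^sub>C x3 - f3" using resolvent_facts(1)[OF lS, of y] by blast
  have nx3: "norm x3 \<le> CS * norm y" using CS[OF xf3(1)] xf3(2) by simp
  obtain s3 where s3: "(x3, s3) \<in> Tpart S" "norm s3 \<le> norm f3" using decomp[OF S xf3(1)] by blast
  have "f3 = l *\<^sub>C x3 - y" using xf3(2) by simp
  then have "norm f3 \<le> norm (l *\<^sub>C x3) + norm y" by (simp add: norm_triangle_ineq4)
  then have nf3: "norm f3 \<le> norm l * norm x3 + norm y" by (simp add: norm_scaleC)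
  have "x3 \<in> rdom (Tpart A)" using xf3(1) dSA dom_Tpart[OF A] unfolding rdom_def by blast
  then obtain g3 where g3: "(x3, g3) \<in> Tpart A" unfolding rdom_def by blast
  have xfg: "(x3, f3 + g3) \<in> T" using xf3(1) g3 Tpart_sub sum unfolding rel_sum_def by blast
  have "RT T l (y - g3) = x3" by (rule RT_eq[OF lT xfg]) (simp add: xf3(2))
  moreover have "RT T l y = x2" by (rule RT_eq[OF lT xf2]) (simp add: y_def)
  ultimately have x3: "x3 = x2 - RT T l g3" using RT_diff[OF T lT, of y g3] by simp
  have V: "(x2, f2) = (RT T l g3, l *\<^sub>C RT T l g3) + (x3, f3)"
  proof -
    have "f2 = l *\<^sub>C x2 - y" by (simp add: y_def)
    moreover have "l *\<^sub>C RT T l g3 + f3 = l *\<^sub>C x2 - y"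
      using xf3(2) x3 by (simp add: scaleC_diff_right)
    ultimately show ?thesis using x3 by simp
  qed
  have "oproj S (x2, f2) = oproj S (RT T l g3, l *\<^sub>C RT T l g3) + (x3, f3)"
    by (subst V, subst oproj_add[OF cs_csub[OF S] cs_closed[OF S]]) (simp only: oproj_id[OF cs_csub[OF S] cs_closed[OF S] xf3(1)])
  then have "(x2, f2) - oproj S (x2, f2) = (RT T l g3, l *\<^sub>C RT T l g3) - oproj S (RT T l g3, l *\<^sub>C RT T l g3)"
    by (subst (1) V) simp
  then show ?thesis using s3 g3 nx3 nf3 unfolding y_def by (meson order.trans)
qed




lemma part_i:
  fixes T S A :: "('a::chilbert_space \<times> 'a) set"
  assumes T: "closed_subspace T" and S: "closed_subspace S" and A: "closed_subspace A"
    and dSA: "rdom S \<subseteq> rdom A" and sum: "T = rel_sum S A"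
    and lT: "l \<in> resolvent_set T" and lS: "l \<in> resolvent_set S"
    and rc: "rel_compact (Tpart A) (Tpart S)"
  shows "compact_perturbation T S"
proof -
  note TT = cs_csub[OF T] cs_closed[OF T]
  note SS = cs_csub[OF S] cs_closed[OF S]
  define G where "G N = {f. \<exists>x v. (x, v) \<in> {p \<in> Tpart S. norm (fst p) + norm (snd p) \<le> N} \<and> (x, f) \<in> Tpart A}" for N
  have Gseq: "\<exists>r::nat\<Rightarrow>nat. strict_mono r \<and> Cauchy (g \<circ> r)" if g: "\<And>n. g n \<in> G N" for g :: "nat \<Rightarrow> 'a" and N
  proof -
    let ?B = "{p \<in> Tpart S. norm (fst p) + norm (snd p) \<le> N}"
    have "\<forall>B\<subseteq>Tpart S. (\<exists>M. \<forall>x v. (x, v) \<in> B \<longrightarrow> norm x + norm v \<le> M) \<longrightarrow>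
        compact (closure {f. \<exists>x v. (x, v) \<in> B \<and> (x, f) \<in> Tpart A})"
      using rc unfolding rel_compact_def by blast
    moreover have "?B \<subseteq> Tpart S" by blast
    moreover have "\<forall>x v. (x, v) \<in> ?B \<longrightarrow> norm x + norm v \<le> N" by simp
    ultimately have "compact (closure {f. \<exists>x v. (x, v) \<in> ?B \<and> (x, f) \<in> Tpart A})" by blast
    then have "compact (closure (G N))" unfolding G_def .
    then show ?thesis using compact_closure_seq g by blast
  qed
  obtain CT where CT: "CT \<ge> 0" "\<And>y. norm (RT T l y) \<le> CT * norm y" using RT_bound[OF lT] by blast
  obtain CS where CS: "CS \<ge> 0" "\<And>x f. (x, f) \<in> S \<Longrightarrow> norm x \<le> CS * norm (l *\<^sub>C x - f)"
    using resolvent_facts(3)[OF lS] by blast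
  define L where "L = norm l"
  define E where "E h = (0, h) - oproj T (0, h)" for h
  have Ediff: "E a - E b = E (a - b)" for a b unfolding E_def using E_diff[OF T, of a b] by simp
  have Enorm: "norm (E h) \<le> norm h" for h
    using oproj_norm_le2(2)[OF TT, of "(0, h)"] unfolding E_def by (simp add: norm_prod_def)
  define V where "V g = (RT T l g, l *\<^sub>C RT T l g)" for g
  define D where "D g = V g - oproj S (V g)" for g
  have Vdiff: "V (a - b) = V a - V b" for a b
    unfolding V_def by (simp add: RT_diff[OF T lT] scaleC_diff_right)
  have Ddiff: "D a - D b = D (a - b)" for a b
    unfolding D_def Vdiff oproj_diff[OF SS] by simp
  have Dnorm: "norm (D g) \<le> ((1 + L) * CT) * norm g" for g
  proof -
    have "norm (D g) \<le> norm (V g)" unfolding D_def by (rule oproj_norm_le2(2)[OF SS])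
    also have "\<dots> \<le> norm (RT T l g) + norm (l *\<^sub>C RT T l g)" unfolding V_def by (rule norm_Pair_le)
    also have "\<dots> = (1 + L) * norm (RT T l g)" by (simp add: norm_scaleC L_def algebra_simps)
    also have "\<dots> \<le> (1 + L) * (CT * norm g)" using CT(2) by (intro mult_left_mono) (auto simp: L_def)
    finally show ?thesis by (simp add: mult.assoc)
  qed
  show ?thesis unfolding compact_perturbation_def compact_op_def oproj2_eq
  proof (intro allI impI)
    fix B :: "('a \<times> 'a) set" assume "bounded B"
    then obtain M0 where M0: "\<And>z. z \<in> B \<Longrightarrow> norm z \<le> M0" unfolding bounded_iff by blast
    define M where "M = \<bar>M0\<bar>"
    have M: "\<And>z. z \<in> B \<Longrightarrow> norm z \<le> M" "M \<ge> 0" using M0 unfolding M_def by force+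
    let ?K = "\<lambda>z. oproj T z - oproj S z"
    show "compact (closure (?K ` B))"
    proof (rule seq_compact_closure)
      fix s :: "nat \<Rightarrow> 'a \<times> 'a" assume s: "\<And>n. s n \<in> ?K ` B"
      have "\<forall>n. \<exists>z. z \<in> B \<and> s n = ?K z" using s by blast
      then obtain zs where zs: "\<And>n. zs n \<in> B" "\<And>n. s n = ?K (zs n)" using choice by metis
      define a where "a n = oproj S (zs n)" for n
      define w where "w n = zs n - a n" for n
      define p where "p n = oproj T (w n)" for n
      have aS: "a n \<in> S" for n unfolding a_def by (rule oproj(1)[OF SS])
      have na: "norm (a n) \<le> M" for n using oproj_norm_le2(1)[OF SS, of "zs n"] M(1)[OF zs(1)[of n]] unfolding a_def by linarith
      have nw: "norm (w n) \<le> M" for n using oproj_norm_le2(2)[OF SS, of "zs n"] M(1)[OF zs(1)[of n]] unfolding w_def a_def by linarith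
      have np: "norm (p n) \<le> M" for n using oproj_norm_le2(1)[OF TT, of "w n"] nw[of n] unfolding p_def by linarith
      have wS: "cinner (w n) q = 0" if "q \<in> S" for n q using oproj(2)[OF SS that] unfolding w_def a_def by blast
      have pT: "p n \<in> T" for n unfolding p_def by (rule oproj(1)[OF TT])
      have Ks: "s n = (oproj T (a n) - a n) + p n" for n
      proof -
        have "zs n = a n + w n" unfolding w_def by simp
        then have "oproj T (zs n) = oproj T (a n) + p n" unfolding p_def using oproj_add[OF TT] by metis
        moreover have "oproj S (zs n) = a n" unfolding a_def ..
        ultimately show ?thesis using zs(2)[of n] by simp
      qed
      have "\<forall>n. \<exists>g. g \<in> G (2 * M) \<and> oproj T (a n) - a n = E g"
      proof
        fix n
        obtain x1 f1 where af: "a n = (x1, f1)" by fastforce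
        obtain g s1 where gs: "(x1, s1) \<in> Tpart S" "norm s1 \<le> norm f1" "(x1, g) \<in> Tpart A"
          "oproj T (x1, f1) - (x1, f1) = (0, g) - oproj T (0, g)"
        proof -
          have "(x1, f1) \<in> S" using aS[of n] af by simp
          from term1[OF T S A dSA sum this] show ?thesis using that by blast
        qed
        have "norm x1 + norm s1 \<le> 2 * M"
          using gs(2) norm_fst_le[of x1 f1] norm_snd_le[of f1 x1] na[of n] af by simp
        then have "g \<in> G (2 * M)" unfolding G_def using gs(1,3) by force
        moreover have "oproj T (a n) - a n = E g" using gs(4) af unfolding E_def by simp
        ultimately show "\<exists>g. g \<in> G (2 * M) \<and> oproj T (a n) - a n = E g" by blast
      qed
      then obtain g1 where g1: "\<And>n. g1 n \<in> G (2 * M)" "\<And>n. oproj T (a n) - a n = E (g1 n)"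
        using choice by metis
      define N2 where "N2 = (CS + L * CS + 1) * ((L + 1) * M)"
      have "\<forall>n. \<exists>g. g \<in> G N2 \<and> p n - oproj S (p n) = D g"
      proof
        fix n
        obtain x2 f2 where pf: "p n = (x2, f2)" by fastforce
        have xf2: "(x2, f2) \<in> T" using pT[of n] pf by simp
        obtain x3 s3 g3 where t2: "(x3, s3) \<in> Tpart S" "(x3, g3) \<in> Tpart A"
          "norm x3 \<le> CS * norm (l *\<^sub>C x2 - f2)" "norm s3 \<le> norm l * norm x3 + norm (l *\<^sub>C x2 - f2)"
          "(x2, f2) - oproj S (x2, f2) = (RT T l g3, l *\<^sub>C RT T l g3) - oproj S (RT T l g3, l *\<^sub>C RT T l g3)"
          using term2[OF T S A dSA sum lT lS CS(2) xf2] by blast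
        define ny where "ny = norm (l *\<^sub>C x2 - f2)"
        have "ny \<le> norm (l *\<^sub>C x2) + norm f2" unfolding ny_def by (rule norm_triangle_ineq4)
        also have "\<dots> = L * norm x2 + norm f2" by (simp add: norm_scaleC L_def)
        also have "\<dots> \<le> L * norm (p n) + norm (p n)"
          using norm_fst_le[of x2 f2] norm_snd_le[of f2 x2] pf by (intro add_mono mult_left_mono) (auto simp: L_def)
        also have "\<dots> \<le> L * M + M" using np[of n] by (intro add_mono mult_left_mono) (auto simp: L_def)
        also have "\<dots> = (L + 1) * M" by (simp add: algebra_simps)
        finally have ny: "ny \<le> (L + 1) * M" .
        have "norm x3 + norm s3 \<le> CS * ny + (L * (CS * ny) + ny)"
          using t2(3,4) unfolding ny_def L_def
          by (meson add_mono mult_left_mono norm_ge_zero order.trans order_refl)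
        also have "\<dots> = (CS + L * CS + 1) * ny" by (simp add: algebra_simps)
        also have "\<dots> \<le> N2" unfolding N2_def using ny CS(1) by (intro mult_left_mono) (auto simp: L_def)
        finally have "g3 \<in> G N2" unfolding G_def using t2(1,2) by force
        moreover have "p n - oproj S (p n) = D g3" using t2(5) pf unfolding D_def V_def by simp
        ultimately show "\<exists>g. g \<in> G N2 \<and> p n - oproj S (p n) = D g" by blast
      qed
      then obtain g3 where g3: "\<And>n. g3 n \<in> G N2" "\<And>n. p n - oproj S (p n) = D (g3 n)"
        using choice by metis
      have "\<exists>r::nat\<Rightarrow>nat. strict_mono r \<and> Cauchy (g1 \<circ> r)" by (rule Gseq) (rule g1(1))
      then obtain r1 :: "nat \<Rightarrow> nat" where r1: "strict_mono r1" "Cauchy (g1 \<circ> r1)" by blast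
      have "\<exists>r::nat\<Rightarrow>nat. strict_mono r \<and> Cauchy ((g3 \<circ> r1) \<circ> r)" by (rule Gseq[where N=N2]) (simp add: g3(1))
      then obtain r2 :: "nat \<Rightarrow> nat" where r2: "strict_mono r2" "Cauchy ((g3 \<circ> r1) \<circ> r2)" by blast
      define r where "r = r1 \<circ> r2"
      have r: "strict_mono r" unfolding r_def using r1(1) r2(1) by (rule strict_mono_o)
      have c1: "Cauchy (g1 \<circ> r)" unfolding r_def using Cauchy_subseq_Cauchy[OF r1(2) r2(1)] by (simp add: o_assoc)
      have c3: "Cauchy (g3 \<circ> r)" unfolding r_def using r2(2) by (simp add: o_assoc)
      have C1: "Cauchy (\<lambda>n. oproj T (a (r n)) - a (r n))"
      proof (rule Cauchy_le[OF c1, where K=1])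
        fix m n
        show "norm ((oproj T (a (r m)) - a (r m)) - (oproj T (a (r n)) - a (r n))) \<le> 1 * norm ((g1 \<circ> r) m - (g1 \<circ> r) n)"
          using Enorm[of "g1 (r m) - g1 (r n)"] by (simp add: g1(2) Ediff)
      qed
      have C2: "Cauchy (\<lambda>n. p (r n))"
      proof (rule Cauchy_sq_le[OF c3, where K="2 * M * ((1 + L) * CT)"])
        fix m n
        define u where "u = w (r m) - w (r n)"
        have Pu: "oproj T u = p (r m) - p (r n)" unfolding u_def p_def by (rule oproj_diff[OF TT])
        have uS: "cinner u q = 0" if "q \<in> S" for q using wS[OF that] unfolding u_def by (simp add: cinner_diff_left)
        have nu: "norm u \<le> 2 * M" unfolding u_def using norm_triangle_ineq4[of "w (r m)" "w (r n)"] nw[of "r m"] nw[of "r n"] by linarith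
        have e1: "cinner (u - oproj T u) (oproj T u) = 0" by (rule oproj(2)[OF TT oproj(1)[OF TT]])
        have e2: "cinner u (oproj S (oproj T u)) = 0" using uS[OF oproj(1)[OF SS]] .
        have e3: "oproj T u - oproj S (oproj T u) = D (g3 (r m) - g3 (r n))"
        proof -
          have "oproj S (p (r m) - p (r n)) = oproj S (p (r m)) - oproj S (p (r n))" by (rule oproj_diff[OF SS])
          then have "(p (r m) - p (r n)) - oproj S (p (r m) - p (r n)) = (p (r m) - oproj S (p (r m))) - (p (r n) - oproj S (p (r n)))"
            by (simp add: algebra_simps)
          also have "\<dots> = D (g3 (r m)) - D (g3 (r n))" by (simp only: g3(2))
          also have "\<dots> = D (g3 (r m) - g3 (r n))" by (rule Ddiff)
          finally show ?thesis unfolding Pu .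
        qed
        have "(norm (oproj T u))\<^sup>2 = Re (cinner (oproj T u) (oproj T u))" by (rule norm_sq_cinner)
        also have "cinner (oproj T u) (oproj T u) = cinner u (oproj T u)" using e1 by (simp add: cinner_diff_left)
        also have "\<dots> = cinner u (oproj T u - oproj S (oproj T u))" using e2 by (simp add: cinner_diff_right)
        also have "Re \<dots> \<le> norm u * norm (D (g3 (r m) - g3 (r n)))" unfolding e3 by (rule Re_cinner_le)
        also have "\<dots> \<le> (2 * M) * (((1 + L) * CT) * norm (g3 (r m) - g3 (r n)))"
          using nu Dnorm M(2) by (intro mult_mono) auto
        finally show "(norm (p (r m) - p (r n)))\<^sup>2 \<le> 2 * M * ((1 + L) * CT) * norm ((g3 \<circ> r) m - (g3 \<circ> r) n)"
          unfolding Pu by (simp add: mult.assoc)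
      qed
      have "Cauchy (\<lambda>n. (oproj T (a (r n)) - a (r n)) + p (r n))" by (rule Cauchy_add2[OF C1 C2])
      then have "Cauchy (s \<circ> r)" by (simp add: o_def Ks)
      then show "\<exists>r::nat\<Rightarrow>nat. strict_mono r \<and> Cauchy (s \<circ> r)" using r by blast
    qed
  qed
qed



theorem theorem3p4:
  fixes T S A :: "('a::chilbert_space \<times> 'a) set"
  assumes "closed_subspace T" and "closed_subspace S" and "closed_subspace A"
    and "hermitian T" and "hermitian S" and "hermitian A"
    and "rdom T = rdom S" and "rdom S \<subseteq> rdom A"
    and "T = rel_sum S A"
    and "resolvent_set T \<inter> resolvent_set S \<noteq> {}"
  shows "(rel_compact (Tpart A) (Tpart S) \<longrightarrow> compact_perturbation T S)
       \<and> ((compact_perturbation T S \<and> reduces (orth (img T 0)) S \<and> reduces (orth (img T 0)) A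
            \<and> bounded_rel (Tpart T))
          \<longrightarrow> rel_compact (Tpart A) (Tpart S))"
proof -
  obtain l where l: "l \<in> resolvent_set T" "l \<in> resolvent_set S" using assms(10) by blast
  show ?thesis
  proof (intro conjI impI)
    assume "rel_compact (Tpart A) (Tpart S)"
    then show "compact_perturbation T S"
      using part_i[OF assms(1,2,3) assms(8) assms(9) l] by blast
  next
    assume h: "compact_perturbation T S \<and> reduces (orth (img T 0)) S \<and> reduces (orth (img T 0)) A
            \<and> bounded_rel (Tpart T)"
    show "rel_compact (Tpart A) (Tpart S)"
      using part_ii[OF assms(1,2,3,4,7,8,9)] h by blast
  qed
qed

end
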